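(* Let $P$ be an instance of $k$-means clustering with $z$ outliers, let $S$ be a finite multiset of points of $P$, let $k'\ge0$ be such that $|S\setminus P_{opt}|\le k'$, and let $H$ be a set of $k+k'$ centers in $\mathbb{R}^D$ with $Cost(S,H)\le c\cdot W$ for some $c\ge1$, where $W$ is the minimum of $Cost(S,H')$ over all sets $H'$ of $k+k'$ points in $\mathbb{R}^D$. Let $S_{opt}=S\cap P_{opt}$. Then $Cost(\tilde S_{opt},H)\le(2+2c)\,Cost(S_{opt},O^* )$.
   Context: $P\subset\mathbb{R}^D$, $|P|=n$, $0<z<n$. $dist(p,H)=\min_{q\in H}\|p-q\|$; $Cost(X,Y)=\sum_{q\in X}dist(q,Y)^2$ (with multiplicity). $P_{opt}\subset P$ with $|P_{opt}|=n-z$ is the set of inliers of an optimal solution of $k$-means with $z$ outliers, $C^*_1,\dots,C^*_k$ the optimal clusters forming $P_{opt}$, $o^*_j$ the mean of $C^*_j$, $O^*=\{o^*_1,\dots,o^*_k\}$. Star shaped transformation: for $p\in C^*_j$, $\tilde p=o^*_j$; for $U\subseteq P_{opt}$ (multiset), $\tilde U$ is the multiset $\{\tilde p:p\in U\}$. *)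

theory Defs
  imports "HOL-Analysis.Analysis" "HOL-Library.Multiset"
begin

definition cost :: "'a::euclidean_space multiset \<Rightarrow> 'a set \<Rightarrow> real" where
  "cost X Y = (\<Sum>q \<in># X. (infdist q Y)\<^sup>2)"

definition centroid :: "'a::euclidean_space set \<Rightarrow> 'a" where
  "centroid A = (1 / real (card A)) *\<^sub>R (\<Sum>p\<in>A. p)"

definition cluster :: "'a set \<Rightarrow> ('a \<Rightarrow> nat) \<Rightarrow> nat \<Rightarrow> 'a set" where
  "cluster Popt \<sigma> j = {p \<in> Popt. \<sigma> p = j}"

definition opt_centers :: "nat \<Rightarrow> 'a::euclidean_space set \<Rightarrow> ('a \<Rightarrow> nat) \<Rightarrow> 'a set" where
  "opt_centers k Popt \<sigma> = (\<lambda>j. centroid (cluster Popt \<sigma> j)) ` {..<k}"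

definition star :: "'a::euclidean_space set \<Rightarrow> ('a \<Rightarrow> nat) \<Rightarrow> 'a \<Rightarrow> 'a" where
  "star Popt \<sigma> p = centroid (cluster Popt \<sigma> (\<sigma> p))"

definition kmeans_outliers_opt ::
  "'a::euclidean_space set \<Rightarrow> nat \<Rightarrow> nat \<Rightarrow> 'a set \<Rightarrow> ('a \<Rightarrow> nat) \<Rightarrow> bool" where
  "kmeans_outliers_opt P k z Popt \<sigma> \<longleftrightarrow>
     Popt \<subseteq> P \<and> card Popt = card P - z \<and>
     (\<forall>p\<in>Popt. \<sigma> p < k) \<and>
     (\<forall>j<k. cluster Popt \<sigma> j \<noteq> {}) \<and>
     (\<forall>p\<in>Popt. dist p (star Popt \<sigma> p) = infdist p (opt_centers k Popt \<sigma>)) \<and>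
     (\<forall>Q H. Q \<subseteq> P \<and> card Q = card P - z \<and> finite H \<and> H \<noteq> {} \<and> card H \<le> k \<longrightarrow>
        cost (mset_set Popt) (opt_centers k Popt \<sigma>) \<le> cost (mset_set Q) H)"

end

theory Submission
  imports Defs
begin

lemma card_set_mset_le_size: "card (set_mset M) \<le> size M"
proof (induction M)
  case empty then show ?case by simp
next
  case (add x M)
  have "card (set_mset (add_mset x M)) \<le> Suc (card (set_mset M))"
    by (simp add: card_insert_le_m1 card_insert_if)
  then show ?case using add by simp
qed

lemma infinite_UNIV_eucl: "infinite (UNIV :: 'a::euclidean_space set)"
proof
  assume fin: "finite (UNIV :: 'a set)"
  obtain b :: 'a where b: "b \<in> Basis" using nonempty_Basis by blast
  hence "b \<noteq> 0" by auto
  hence "inj (\<lambda>r::real. r *\<^sub>R b)" by (auto simp: inj_on_def)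
  moreover have "finite (range (\<lambda>r::real. r *\<^sub>R b))" by (rule finite_subset[OF subset_UNIV fin])
  ultimately have "finite (UNIV :: real set)" by (intro finite_imageD[of "\<lambda>r::real. r *\<^sub>R b"])
  thus False using infinite_UNIV_char_0 by blast
qed

lemma cost_nonneg: "cost X Y \<ge> 0"
  unfolding cost_def by (induction X) auto

lemma cost_union: "cost (A + B) Y = cost A Y + cost B Y"
  unfolding cost_def by simp

theorem lemma6:
  fixes P :: "'a::euclidean_space set" and k z k' :: nat
    and Popt :: "'a set" and \<sigma> :: "'a \<Rightarrow> nat"
    and S :: "'a multiset" and H :: "'a set" and c :: real
  assumes "finite P" and "0 < z" and "z < card P"
    and "kmeans_outliers_opt P k z Popt \<sigma>"
    and "set_mset S \<subseteq> P"
    and "size (filter_mset (\<lambda>p. p \<notin> Popt) S) \<le> k'"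
    and "finite H" and "card H = k + k'"
    and "c \<ge> 1"
    and "cost S H \<le> c * Inf {cost S H' | H'. finite H' \<and> card H' = k + k'}"
  shows "cost (image_mset (star Popt \<sigma>) (filter_mset (\<lambda>p. p \<in> Popt) S)) H
           \<le> (2 + 2 * c) * cost (filter_mset (\<lambda>p. p \<in> Popt) S) (opt_centers k Popt \<sigma>)"
proof -
  define Sopt where "Sopt = filter_mset (\<lambda>p. p \<in> Popt) S"
  define Sout where "Sout = filter_mset (\<lambda>p. p \<notin> Popt) S"
  define Oc where "Oc = opt_centers k Popt \<sigma>"
  have opt: "\<forall>p\<in>Popt. dist p (star Popt \<sigma> p) = infdist p Oc"
    and sig: "\<forall>p\<in>Popt. \<sigma> p < k"
  proof -
    have K: "(\<forall>p\<in>Popt. \<sigma> p < k) \<and> (\<forall>p\<in>Popt. dist p (star Popt \<sigma> p) = infdist p (opt_centers k Popt \<sigma>))"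
      using assms(4) unfolding kmeans_outliers_opt_def by (elim conjE) (intro conjI)
    show "\<forall>p\<in>Popt. dist p (star Popt \<sigma> p) = infdist p Oc" using K unfolding Oc_def by (elim conjE)
    show "\<forall>p\<in>Popt. \<sigma> p < k" using K by (elim conjE)
  qed
  have S_split: "S = Sopt + Sout" unfolding Sopt_def Sout_def by simp
  have pw: "(infdist (star Popt \<sigma> p) H)\<^sup>2 \<le> 2 * (infdist p Oc)\<^sup>2 + 2 * (infdist p H)\<^sup>2"
    if "p \<in># Sopt" for p
  proof -
    have pP: "p \<in> Popt" using that unfolding Sopt_def by simp
    have "infdist (star Popt \<sigma> p) H \<le> infdist p H + dist (star Popt \<sigma> p) p"
      by (rule infdist_triangle)
    also have "dist (star Popt \<sigma> p) p = infdist p Oc" using opt pP by (simp add: dist_commute)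
    finally have t: "infdist (star Popt \<sigma> p) H \<le> infdist p H + infdist p Oc" .
    have "0 \<le> infdist (star Popt \<sigma> p) H" by (rule infdist_nonneg)
    hence "(infdist (star Popt \<sigma> p) H)\<^sup>2 \<le> (infdist p H + infdist p Oc)\<^sup>2"
      using t by (simp add: power_mono)
    also have "\<dots> \<le> 2 * (infdist p Oc)\<^sup>2 + 2 * (infdist p H)\<^sup>2"
    proof -
      have "0 \<le> (infdist p H - infdist p Oc)\<^sup>2" by simp
      thus ?thesis unfolding power2_sum power2_diff by linarith
    qed
    finally show ?thesis .
  qed
  have c1: "cost (image_mset (star Popt \<sigma>) Sopt) H \<le> 2 * cost Sopt Oc + 2 * cost Sopt H"
  proof -
    have "cost (image_mset (star Popt \<sigma>) Sopt) H = (\<Sum>p\<in>#Sopt. (infdist (star Popt \<sigma> p) H)\<^sup>2)"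
      unfolding cost_def by (simp add: image_mset.compositionality comp_def)
    also have "\<dots> \<le> (\<Sum>p\<in>#Sopt. 2 * (infdist p Oc)\<^sup>2 + 2 * (infdist p H)\<^sup>2)"
      by (rule sum_mset_mono) (rule pw)
    also have "\<dots> = 2 * cost Sopt Oc + 2 * cost Sopt H"
      unfolding cost_def by (simp add: sum_mset.distrib sum_mset_distrib_left)
    finally show ?thesis .
  qed
  have c2: "cost Sopt H \<le> cost S H"
  proof -
    have "cost S H = cost Sopt H + cost Sout H" using S_split cost_union by simp
    thus ?thesis using cost_nonneg[of Sout H] by linarith
  qed
  define Out where "Out = set_mset Sout"
  have finO: "finite Oc" unfolding Oc_def opt_centers_def by simp
  have cardO: "card Oc \<le> k" unfolding Oc_def opt_centers_def
    using card_image_le[of "{..<k}"] by simp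
  have cardOut: "card Out \<le> k'" unfolding Out_def Sout_def
    using card_set_mset_le_size assms(6) le_trans by blast
  have finU: "finite (Oc \<union> Out)" using finO Out_def by simp
  have cardU: "card (Oc \<union> Out) \<le> k + k'"
    using card_Un_le[of Oc Out] cardO cardOut by simp
  have "infinite (UNIV - (Oc \<union> Out))" using infinite_UNIV_eucl finU by auto
  then obtain B where B: "finite B" "card B = k + k' - card (Oc \<union> Out)" "B \<subseteq> UNIV - (Oc \<union> Out)"
    using infinite_arbitrarily_large by blast
  define H' where "H' = Oc \<union> Out \<union> B"
  have finH': "finite H'" using finU B unfolding H'_def by simp
  have cardH': "card H' = k + k'"
  proof -
    have "B \<inter> (Oc \<union> Out) = {}" using B(3) by blast
    hence "card H' = card (Oc \<union> Out) + card B" unfolding H'_def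
      using card_Un_disjoint[OF finU B(1)] by (simp add: Int_commute)
    thus ?thesis using B(2) cardU by simp
  qed
  have costH': "cost S H' \<le> cost Sopt Oc"
  proof -
    have "cost Sout H' = 0"
      unfolding cost_def
    proof (rule sum_mset.neutral, intro ballI)
      fix x assume "x \<in># image_mset (\<lambda>q. (infdist q H')\<^sup>2) Sout"
      then obtain q where "q \<in># Sout" "x = (infdist q H')\<^sup>2" by auto
      moreover have "q \<in> H'" using \<open>q \<in># Sout\<close> unfolding H'_def Out_def by simp
      ultimately show "x = 0" by (simp add: infdist_zero)
    qed
    moreover have "cost Sopt H' \<le> cost Sopt Oc"
      unfolding cost_def
    proof (rule sum_mset_mono)
      fix p assume "p \<in># Sopt"
      hence "p \<in> Popt" unfolding Sopt_def by simp
      hence "\<sigma> p < k" using sig by auto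
      hence "Oc \<noteq> {}" unfolding Oc_def opt_centers_def by auto
      hence "infdist p H' \<le> infdist p Oc" by (intro infdist_mono) (auto simp: H'_def)
      thus "(infdist p H')\<^sup>2 \<le> (infdist p Oc)\<^sup>2" by (rule power_mono) (rule infdist_nonneg)
    qed
    ultimately show ?thesis using S_split cost_union[of Sopt Sout H'] by simp
  qed
  have W: "Inf {cost S H' | H'. finite H' \<and> card H' = k + k'} \<le> cost Sopt Oc"
  proof -
    have "Inf {cost S H' | H'. finite H' \<and> card H' = k + k'} \<le> cost S H'"
    proof (rule cInf_lower)
      show "cost S H' \<in> {cost S H' | H'. finite H' \<and> card H' = k + k'}" using finH' cardH' by blast
      show "bdd_below {cost S H' | H'. finite H' \<and> card H' = k + k'}"
        by (rule bdd_belowI[where m=0]) (auto simp: cost_nonneg)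
    qed
    thus ?thesis using costH' by simp
  qed
  have "cost S H \<le> c * cost Sopt Oc"
  proof -
    have "c * Inf {cost S H' | H'. finite H' \<and> card H' = k + k'} \<le> c * cost Sopt Oc"
      using W assms(9) by (intro mult_left_mono) auto
    thus ?thesis using assms(10) by linarith
  qed
  hence "cost (image_mset (star Popt \<sigma>) Sopt) H \<le> 2 * cost Sopt Oc + 2 * (c * cost Sopt Oc)"
    using c1 c2 by linarith
  moreover have "(2 + 2 * c) * cost Sopt Oc = 2 * cost Sopt Oc + 2 * (c * cost Sopt Oc)"
    by (simp add: distrib_right)
  ultimately have "cost (image_mset (star Popt \<sigma>) Sopt) H \<le> (2 + 2 * c) * cost Sopt Oc"
    by linarith
  thus ?thesis unfolding Sopt_def Oc_def .
qed

end
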